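(* Let $G$ be a finite group, $p$ a prime, and $S$ a Sylow $p$-subgroup of $G$. Then $W_G(S)$ is a subgroup of $Z(S)$.
   Context: An element $x \in S$ is weakly closed in $S$ with respect to $G$ if $x^g = x$ whenever $g \in G$ and $x^g := g^{-1}xg \in S$. $W_G(S)$ denotes the set of all elements of $S$ that are weakly closed in $S$ with respect to $G$. *)

theory Defs
  imports "HOL-Algebra.Algebra" "HOL-Computational_Algebra.Primes"
begin

definition sylow_subgroup :: "('a, 'b) monoid_scheme \<Rightarrow> nat \<Rightarrow> 'a set \<Rightarrow> bool" where
  "sylow_subgroup G p S \<longleftrightarrow> subgroup S G \<and> card S = p ^ multiplicity p (order G)"

definition center_of :: "('a, 'b) monoid_scheme \<Rightarrow> 'a set \<Rightarrow> 'a set" where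
  "center_of G S = {z \<in> S. \<forall>y\<in>S. z \<otimes>\<^bsub>G\<^esub> y = y \<otimes>\<^bsub>G\<^esub> z}"

definition conj_by :: "('a, 'b) monoid_scheme \<Rightarrow> 'a \<Rightarrow> 'a \<Rightarrow> 'a" where
  "conj_by G x g = inv\<^bsub>G\<^esub> g \<otimes>\<^bsub>G\<^esub> x \<otimes>\<^bsub>G\<^esub> g"

definition weakly_closed_elems :: "('a, 'b) monoid_scheme \<Rightarrow> 'a set \<Rightarrow> 'a set" where
  "weakly_closed_elems G S =
     {x \<in> S. \<forall>g\<in>carrier G. conj_by G x g \<in> S \<longrightarrow> conj_by G x g = x}"

end

theory Submission
  imports Defs
begin

lemma fixpoint_lemma:
  fixes p :: nat
  assumes act: "group_action H E \<phi>" and fin: "finite (carrier H)" "finite E"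
    and pr: "Factorial_Ring.prime p" and ord: "order H = p ^ k" and nd: "\<not> p dvd card E"
  shows "\<exists>x\<in>E. \<forall>h\<in>carrier H. \<phi> h x = x"
proof (rule ccontr)
  assume nf: "\<not> (\<exists>x\<in>E. \<forall>h\<in>carrier H. \<phi> h x = x)"
  interpret group_action H E \<phi> by (rule act)
  have orbdvd: "p dvd card Ob" if Ob: "Ob \<in> orbits H E \<phi>" for Ob
  proof -
    obtain x where x: "x \<in> E" and Ox: "Ob = orbit H \<phi> x" using Ob unfolding orbits_def by blast
    have "card Ob * card (stabilizer H \<phi> x) = p ^ k"
      using orbit_stabilizer_theorem[OF x] Ox ord by simp
    hence "card Ob dvd p ^ k" by (metis dvd_triv_left)
    then obtain i where i: "i \<le> k" "card Ob = p ^ i" using divides_primepow_nat[OF pr] by blast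
    show ?thesis
    proof (cases i)
      case 0
      hence c1: "card Ob = 1" using i by simp
      have xO: "x \<in> Ob" using orbit_refl[OF x] Ox by simp
      have "\<forall>h\<in>carrier H. \<phi> h x = x"
      proof
        fix h assume h: "h \<in> carrier H"
        have "\<phi> h x \<in> Ob" using h Ox unfolding orbit_def by blast
        thus "\<phi> h x = x" using c1 xO by (metis card_1_singletonE singletonD)
      qed
      thus ?thesis using nf x by blast
    next
      case (Suc j)
      thus ?thesis using i by simp
    qed
  qed
  have "(\<Sum>orb\<in>(orbits H E \<phi>). \<Sum>x\<in>orb. (1::nat)) = (\<Sum>x\<in>E. 1)"
    by (rule disjoint_sum[OF fin(2)])
  hence "card E = (\<Sum>orb\<in>(orbits H E \<phi>). card orb)" by simp
  moreover have "p dvd (\<Sum>orb\<in>(orbits H E \<phi>). card orb)"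
    by (rule dvd_sum) (rule orbdvd)
  ultimately show False using nd by simp
qed

lemma (in group) rmult_bij:
  assumes C: "subgroup C G" and Q: "subgroup Q G" and h: "h \<in> C"
  shows "(\<lambda>M\<in>{Q #> c | c. c \<in> C}. M #> inv h) \<in> Bij {Q #> c | c. c \<in> C}"
proof -
  let ?E = "{Q #> c | c. c \<in> C}"
  have Cc: "C \<subseteq> carrier G" using subgroup.subset[OF C] .
  have Qc: "Q \<subseteq> carrier G" using subgroup.subset[OF Q] .
  have hc: "h \<in> carrier G" using h Cc by blast
  have img: "M #> k \<in> ?E" if MK: "M \<in> ?E" "k \<in> C" for M k
  proof -
    obtain c where c: "c \<in> C" "M = Q #> c" using MK(1) by auto
    have "M #> k = Q #> (c \<otimes> k)" using c MK Cc Qc by (simp add: coset_mult_assoc subset_iff)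
    moreover have "c \<otimes> k \<in> C" using subgroup.m_closed[OF C c(1) MK(2)] .
    ultimately show ?thesis by auto
  qed
  have sub: "M \<subseteq> carrier G" if ME: "M \<in> ?E" for M
  proof -
    obtain c where c: "c \<in> C" "M = Q #> c" using ME by auto
    thus ?thesis using Qc Cc r_coset_subset_G[of Q c] by auto
  qed
  have ih: "inv h \<in> C" using subgroup.m_inv_closed[OF C h] .
  have "bij_betw (\<lambda>M. M #> inv h) ?E ?E"
  proof (rule bij_betw_byWitness[where f'="\<lambda>M. M #> h"])
    show "\<forall>a\<in>?E. a #> inv h #> h = a"
    proof
      fix a assume "a \<in> ?E"
      hence "a \<subseteq> carrier G" by (rule sub)
      thus "a #> inv h #> h = a" using hc by (simp add: coset_mult_assoc coset_mult_one)
    qed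
    show "\<forall>a\<in>?E. a #> h #> inv h = a"
    proof
      fix a assume "a \<in> ?E"
      hence "a \<subseteq> carrier G" by (rule sub)
      thus "a #> h #> inv h = a" using hc by (simp add: coset_mult_assoc coset_mult_one)
    qed
    show "(\<lambda>M. M #> inv h) ` ?E \<subseteq> ?E" using img ih by blast
    show "(\<lambda>M. M #> h) ` ?E \<subseteq> ?E" using img h by blast
  qed
  thus ?thesis unfolding Bij_def by simp
qed

lemma (in group) rmult_action:
  assumes A: "subgroup A G" and C: "subgroup C G" and Q: "subgroup Q G" and AC: "A \<subseteq> C"
  shows "group_action (G\<lparr>carrier := A\<rparr>) {Q #> c | c. c \<in> C}
           (\<lambda>h. \<lambda>M\<in>{Q #> c | c. c \<in> C}. M #> inv h)"
proof -
  let ?E = "{Q #> c | c. c \<in> C}"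
  let ?\<phi> = "\<lambda>h. \<lambda>M\<in>?E. M #> inv h"
  have Cc: "C \<subseteq> carrier G" using subgroup.subset[OF C] .
  have Qc: "Q \<subseteq> carrier G" using subgroup.subset[OF Q] .
  have sub: "M \<subseteq> carrier G" if ME: "M \<in> ?E" for M
  proof -
    obtain c where c: "c \<in> C" "M = Q #> c" using ME by auto
    thus ?thesis using Qc Cc r_coset_subset_G[of Q c] by auto
  qed
  have bij: "?\<phi> h \<in> Bij ?E" if "h \<in> A" for h using rmult_bij[OF C Q] that AC by blast
  have img: "M #> k \<in> ?E" if MK: "M \<in> ?E" "k \<in> C" for M k
  proof -
    obtain c where c: "c \<in> C" "M = Q #> c" using MK by blast
    have "M #> k = Q #> (c \<otimes> k)" using c MK Cc Qc by (simp add: coset_mult_assoc subset_iff)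
    moreover have "c \<otimes> k \<in> C" using subgroup.m_closed[OF C c(1) MK(2)] .
    ultimately show ?thesis by blast
  qed
  have "?\<phi> (x \<otimes> y) = ?\<phi> x \<otimes>\<^bsub>BijGroup ?E\<^esub> ?\<phi> y" if "x \<in> A" "y \<in> A" for x y
  proof -
    have xc: "x \<in> carrier G" "y \<in> carrier G" using that AC Cc by auto
    have ic: "inv y \<in> C" "inv x \<in> C" using that AC subgroup.m_inv_closed[OF C] by auto
    have "?\<phi> x \<otimes>\<^bsub>BijGroup ?E\<^esub> ?\<phi> y = compose ?E (?\<phi> x) (?\<phi> y)"
      using bij that unfolding BijGroup_def by simp
    also have "\<dots> = ?\<phi> (x \<otimes> y)"
    proof (rule ext)
      fix M
      show "compose ?E (?\<phi> x) (?\<phi> y) M = ?\<phi> (x \<otimes> y) M"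
      proof (cases "M \<in> ?E")
        case M: True
        have "M #> inv y \<in> ?E" using img M ic by blast
        thus ?thesis
          using M sub[OF M] xc by (simp add: compose_def inv_mult_group coset_mult_assoc)
      next
        case False
        show ?thesis by (simp only: compose_def restrict_apply if_not_P[OF False])
      qed
    qed
    finally show ?thesis by simp
  qed
  hence hom: "?\<phi> \<in> hom (G\<lparr>carrier := A\<rparr>) (BijGroup ?E)"
    unfolding hom_def BijGroup_def using bij by auto
  show ?thesis
    unfolding group_action_def group_hom_def
    using hom group_BijGroup subgroup_imp_group[OF A] by (simp add: group_hom_axioms.intro)
qed


lemma (in group) cancel1: "g \<in> carrier G \<Longrightarrow> z \<in> carrier G \<Longrightarrow> g \<otimes> (inv g \<otimes> z) = z"
  by (simp add: m_assoc[symmetric])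

lemma (in group) cancel2: "g \<in> carrier G \<Longrightarrow> z \<in> carrier G \<Longrightarrow> inv g \<otimes> (g \<otimes> z) = z"
  by (simp add: m_assoc[symmetric])

lemma (in group) conj_mult:
  "a \<in> carrier G \<Longrightarrow> b \<in> carrier G \<Longrightarrow> g \<in> carrier G \<Longrightarrow>
   conj_by G (a \<otimes> b) g = conj_by G a g \<otimes> conj_by G b g"
  unfolding conj_by_def by (simp add: m_assoc cancel1)

lemma (in group) conj_closed:
  "a \<in> carrier G \<Longrightarrow> g \<in> carrier G \<Longrightarrow> conj_by G a g \<in> carrier G"
  unfolding conj_by_def by simp

lemma (in group) conj_inv:
  "a \<in> carrier G \<Longrightarrow> g \<in> carrier G \<Longrightarrow> conj_by G (inv a) g = inv (conj_by G a g)"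
  unfolding conj_by_def by (simp add: m_assoc inv_mult_group)

lemma (in group) conj_comp:
  "a \<in> carrier G \<Longrightarrow> g \<in> carrier G \<Longrightarrow> c \<in> carrier G \<Longrightarrow>
   conj_by G a (g \<otimes> c) = conj_by G (conj_by G a g) c"
  unfolding conj_by_def by (simp add: m_assoc inv_mult_group)

lemma (in group) conj_inj:
  "a \<in> carrier G \<Longrightarrow> b \<in> carrier G \<Longrightarrow> g \<in> carrier G \<Longrightarrow>
   conj_by G a g = conj_by G b g \<Longrightarrow> a = b"
  unfolding conj_by_def by (simp add: m_assoc)

lemma (in group) conj_fix_iff:
  "a \<in> carrier G \<Longrightarrow> u \<in> carrier G \<Longrightarrow> conj_by G a u = a \<longleftrightarrow> a \<otimes> u = u \<otimes> a"
  unfolding conj_by_def by (metis inv_solve_left' m_assoc m_closed inv_closed)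

lemma (in group) comm_inv:
  "a \<in> carrier G \<Longrightarrow> w \<in> carrier G \<Longrightarrow> a \<otimes> w = w \<otimes> a \<Longrightarrow> inv a \<otimes> w = w \<otimes> inv a"
  by (metis inv_solve_left' inv_solve_right' m_assoc m_closed inv_closed)

lemma (in group) key_eq:
  assumes "h \<in> carrier G" "c \<in> carrier G" "g \<in> carrier G" "s \<in> carrier G"
    and "c \<otimes> h = conj_by G s g \<otimes> c"
  shows "conj_by G h (inv (g \<otimes> c)) = s"
proof -
  have "h = inv c \<otimes> (conj_by G s g \<otimes> c)"
    using assms by (metis cancel2)
  thus ?thesis using assms unfolding conj_by_def
    by (simp add: m_assoc inv_mult_group cancel1 cancel2)
qed


lemma (in group) W_center:
  assumes S: "subgroup S G" and x: "x \<in> weakly_closed_elems G S" and y: "y \<in> S"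
  shows "x \<otimes> y = y \<otimes> x"
proof -
  have Sc: "S \<subseteq> carrier G" using subgroup.subset[OF S] .
  have xS: "x \<in> S" using x unfolding weakly_closed_elems_def by simp
  have "conj_by G x y \<in> S" unfolding conj_by_def
    using S xS y by (simp add: subgroup.m_closed subgroup.m_inv_closed)
  hence "conj_by G x y = x" using x y Sc unfolding weakly_closed_elems_def by auto
  thus ?thesis using conj_fix_iff xS y Sc by auto
qed

lemma (in group) W_mult:
  fixes p :: nat
  assumes fin: "finite (carrier G)" and pr: "Factorial_Ring.prime p"
    and S: "subgroup S G" and cS: "card S = p ^ multiplicity p (order G)"
    and x: "x \<in> weakly_closed_elems G S" and y: "y \<in> weakly_closed_elems G S"
  shows "x \<otimes> y \<in> weakly_closed_elems G S"
proof -
  let ?n = "multiplicity p (order G)"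
  have Sc: "S \<subseteq> carrier G" using subgroup.subset[OF S] .
  have xS: "x \<in> S" and yS: "y \<in> S" using x y unfolding weakly_closed_elems_def by auto
  have xc: "x \<in> carrier G" and yc: "y \<in> carrier G" using xS yS Sc by auto
  have xyS: "x \<otimes> y \<in> S" using subgroup.m_closed[OF S xS yS] .
  have xyc: "x \<otimes> y \<in> carrier G" using xc yc by simp
  have xcen: "x \<otimes> s = s \<otimes> x" if "s \<in> S" for s using W_center[OF S x that] .
  have ycen: "y \<otimes> s = s \<otimes> y" if "s \<in> S" for s using W_center[OF S y that] .
  have xycen: "(x \<otimes> y) \<otimes> s = s \<otimes> (x \<otimes> y)" if sS: "s \<in> S" for s
  proof -
    have sc: "s \<in> carrier G" using sS Sc by auto
    have "(x \<otimes> y) \<otimes> s = x \<otimes> (s \<otimes> y)" using ycen[OF sS] xc yc sc by (simp add: m_assoc)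
    also have "\<dots> = (s \<otimes> x) \<otimes> y" using xcen[OF sS] xc yc sc by (simp add: m_assoc[symmetric])
    finally show ?thesis using xc yc sc by (simp add: m_assoc)
  qed
  have "conj_by G (x \<otimes> y) g = x \<otimes> y"
    if g: "g \<in> carrier G" and wS: "conj_by G (x \<otimes> y) g \<in> S" for g
  proof -
    define w where "w = conj_by G (x \<otimes> y) g"
    have wS': "w \<in> S" using wS w_def by simp
    have wc: "w \<in> carrier G" using wS' Sc by auto
    define C where "C = {c \<in> carrier G. c \<otimes> w = w \<otimes> c}"
    have C: "subgroup C G"
    proof (rule subgroupI)
      show "C \<subseteq> carrier G" unfolding C_def by auto
      show "C \<noteq> {}" unfolding C_def using wc by (metis (mono_tags, lifting) empty_iff mem_Collect_eq one_closed l_one r_one)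
      show "inv a \<in> C" if "a \<in> C" for a using that comm_inv wc unfolding C_def by auto
      show "a \<otimes> b \<in> C" if "a \<in> C" "b \<in> C" for a b
      proof -
        have ac: "a \<in> carrier G" "b \<in> carrier G" "a \<otimes> w = w \<otimes> a" "b \<otimes> w = w \<otimes> b"
          using that unfolding C_def by auto
        have "a \<otimes> b \<otimes> w = a \<otimes> (w \<otimes> b)" using ac wc by (simp add: m_assoc)
        also have "\<dots> = w \<otimes> a \<otimes> b" using ac wc by (simp add: m_assoc[symmetric])
        finally show ?thesis using ac wc unfolding C_def by (simp add: m_assoc)
      qed
    qed
    have Cc: "C \<subseteq> carrier G" unfolding C_def by auto
    define Q where "Q = (\<lambda>s. conj_by G s g) ` S"
    have Q: "subgroup Q G"
    proof (rule subgroupI)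
      show "Q \<subseteq> carrier G" unfolding Q_def using Sc g conj_closed by auto
      show "Q \<noteq> {}" unfolding Q_def using subgroup.one_closed[OF S] by auto
      show "inv a \<in> Q" if aQ: "a \<in> Q" for a
      proof -
        obtain s where s: "s \<in> S" "a = conj_by G s g" using aQ unfolding Q_def by auto
        have "s \<in> carrier G" using s Sc by auto
        hence "inv a = conj_by G (inv s) g" using s g conj_inv[of s g] by simp
        moreover have "inv s \<in> S" using subgroup.m_inv_closed[OF S s(1)] .
        ultimately show ?thesis unfolding Q_def by auto
      qed
      show "a \<otimes> b \<in> Q" if abQ: "a \<in> Q" "b \<in> Q" for a b
      proof -
        obtain s where s: "s \<in> S" "a = conj_by G s g" using abQ(1) unfolding Q_def by auto
        obtain t where t: "t \<in> S" "b = conj_by G t g" using abQ(2) unfolding Q_def by auto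
        have "s \<in> carrier G" "t \<in> carrier G" using s t Sc by auto
        hence "a \<otimes> b = conj_by G (s \<otimes> t) g" using s t g conj_mult[of s t g] by simp
        moreover have "s \<otimes> t \<in> S" using subgroup.m_closed[OF S s(1) t(1)] .
        ultimately show ?thesis unfolding Q_def by auto
      qed
    qed
    have cQ: "card Q = card S" unfolding Q_def
    proof (rule card_image)
      show "inj_on (\<lambda>s. conj_by G s g) S" unfolding inj_on_def using Sc g conj_inj by blast
    qed
    have QC: "Q \<subseteq> C"
    proof
      fix q assume "q \<in> Q"
      then obtain s where s: "s \<in> S" "q = conj_by G s g" unfolding Q_def by auto
      have sc: "s \<in> carrier G" using s Sc by auto
      have "q \<otimes> w = conj_by G (s \<otimes> (x \<otimes> y)) g" using s sc xyc g conj_mult[of s "x \<otimes> y" g] w_def by simp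
      also have "\<dots> = conj_by G ((x \<otimes> y) \<otimes> s) g" using xycen[OF s(1)] by simp
      also have "\<dots> = w \<otimes> q" using s sc xyc g conj_mult[of "x \<otimes> y" s g] w_def by simp
      finally show "q \<in> C" unfolding C_def using s sc g conj_closed by auto
    qed
    define A where "A = S \<inter> C"
    have A: "subgroup A G" unfolding A_def using subgroups_Inter_pair[OF S C] .
    have AC: "A \<subseteq> C" unfolding A_def by auto
    have xA: "x \<in> A" unfolding A_def C_def using xS xc xcen[OF wS'] by auto
    have yA: "y \<in> A" unfolding A_def C_def using yS yc ycen[OF wS'] by auto
    have "card A dvd card S"
    proof -
      interpret GS: group "G\<lparr>carrier := S\<rparr>" using subgroup_imp_group[OF S] .
      have "subgroup A (G\<lparr>carrier := S\<rparr>)" using subgroup_incl[OF A S] A_def by auto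
      from GS.lagrange[OF this] show ?thesis by (simp add: order_def) (metis dvd_triv_right)
    qed
    then obtain k where k: "card A = p ^ k" using divides_primepow_nat[OF pr] cS by auto
    define E where "E = {Q #> c | c. c \<in> C}"
    have cEQ: "card E * card Q = card C"
    proof -
      interpret GC: group "G\<lparr>carrier := C\<rparr>" using subgroup_imp_group[OF C] .
      have QsC: "subgroup Q (G\<lparr>carrier := C\<rparr>)" using subgroup_incl[OF Q C QC] .
      have "rcosets\<^bsub>G\<lparr>carrier := C\<rparr>\<^esub> Q = E"
        unfolding E_def RCOSETS_def r_coset_def by auto
      with GC.lagrange[OF QsC] show ?thesis by (simp add: order_def)
    qed
    have CG: "card C dvd order G" using lagrange[OF C] by (metis dvd_triv_right)
    have oG: "order G \<noteq> 0" using fin by (simp add: order_def card_gt_0_iff[symmetric]) (metis card_0_eq one_closed empty_iff)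
    have pnu: "\<not> is_unit p" using prime_gt_1_nat[OF pr] by simp
    have ndE: "\<not> p dvd card E"
    proof
      assume "p dvd card E"
      then obtain r where "card E = p * r" by auto
      hence "card C = p ^ Suc ?n * r" using cEQ cQ cS by (simp add: ac_simps)
      hence "p ^ Suc ?n dvd card C" by simp
      hence "p ^ Suc ?n dvd order G" using CG dvd_trans by blast
      thus False using power_dvd_iff_le_multiplicity[OF oG pnu, of "Suc ?n"] by linarith
    qed
    have finE: "finite E"
    proof -
      have "E = (\<lambda>c. Q #> c) ` C" unfolding E_def by auto
      moreover have "finite C" using Cc fin finite_subset by auto
      ultimately show ?thesis by simp
    qed
    have act: "group_action (G\<lparr>carrier := A\<rparr>) E (\<lambda>h. \<lambda>M\<in>E. M #> inv h)"
      unfolding E_def using rmult_action[OF A C Q AC] .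
    have finA: "finite (carrier (G\<lparr>carrier := A\<rparr>))"
      using A_def Sc fin finite_subset by auto
    have ordA: "order (G\<lparr>carrier := A\<rparr>) = p ^ k" using k by (simp add: order_def)
    obtain M where ME: "M \<in> E" and fixM: "\<forall>h\<in>A. (\<lambda>M\<in>E. M #> inv h) M = M"
      using fixpoint_lemma[OF act finA finE pr ordA ndE] by auto
    obtain c where c: "c \<in> C" "M = Q #> c" using ME unfolding E_def by auto
    have cc: "c \<in> carrier G" using c Cc by auto
    have u: "h \<otimes> (g \<otimes> c) = (g \<otimes> c) \<otimes> h" if hW: "h \<in> weakly_closed_elems G S" and hA: "h \<in> A" for h
    proof -
      have hc: "h \<in> carrier G" using hA A_def Sc by auto
      have ihA: "inv h \<in> A" using subgroup.m_inv_closed[OF A hA] .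
      have "M #> inv (inv h) = M" using fixM ihA ME by auto
      hence Mh: "Q #> c #> h = Q #> c" using c hc by simp
      have Qc: "Q \<subseteq> carrier G" using Q subgroup.subset by auto
      have "c \<otimes> h \<in> Q #> (c \<otimes> h)" using rcos_self[OF _ Q] cc hc by simp
      also have "Q #> (c \<otimes> h) = Q #> c" using Mh coset_mult_assoc[OF Qc cc hc] by simp
      finally obtain q where q: "q \<in> Q" "c \<otimes> h = q \<otimes> c" unfolding r_coset_def by auto
      obtain s where s: "s \<in> S" "q = conj_by G s g" using q unfolding Q_def by auto
      have sc: "s \<in> carrier G" using s Sc by auto
      have e1: "conj_by G h (inv (g \<otimes> c)) = s" using key_eq[OF hc cc g sc] q s by simp
      have "inv (g \<otimes> c) \<in> carrier G" using g cc by simp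
      hence "conj_by G h (inv (g \<otimes> c)) = h" using hW e1 s unfolding weakly_closed_elems_def by auto
      hence "h \<otimes> inv (g \<otimes> c) = inv (g \<otimes> c) \<otimes> h" using conj_fix_iff hc g cc by simp
      hence "inv (inv (g \<otimes> c)) \<otimes> h = h \<otimes> inv (inv (g \<otimes> c))"
        using comm_inv[of "inv (g \<otimes> c)" h] hc g cc by simp
      thus ?thesis using g cc by simp
    qed
    have ux: "x \<otimes> (g \<otimes> c) = (g \<otimes> c) \<otimes> x" using u[OF x xA] .
    have uy: "y \<otimes> (g \<otimes> c) = (g \<otimes> c) \<otimes> y" using u[OF y yA] .
    have "(x \<otimes> y) \<otimes> (g \<otimes> c) = (g \<otimes> c) \<otimes> (x \<otimes> y)"
    proof -
      have "(x \<otimes> y) \<otimes> (g \<otimes> c) = x \<otimes> ((g \<otimes> c) \<otimes> y)" using uy xc yc g cc by (simp add: m_assoc)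
      also have "\<dots> = ((g \<otimes> c) \<otimes> x) \<otimes> y" using ux xc yc g cc by (simp add: m_assoc[symmetric])
      finally show ?thesis using xc yc g cc by (simp add: m_assoc)
    qed
    hence "conj_by G (x \<otimes> y) (g \<otimes> c) = x \<otimes> y" using conj_fix_iff xyc g cc by simp
    moreover have "conj_by G (x \<otimes> y) (g \<otimes> c) = w"
    proof -
      have "conj_by G (x \<otimes> y) (g \<otimes> c) = conj_by G w c" using conj_comp xyc g cc w_def by simp
      also have "\<dots> = w" using conj_fix_iff wc cc c(1) unfolding C_def by auto
      finally show ?thesis .
    qed
    ultimately show ?thesis using w_def by simp
  qed
  thus ?thesis using xyS unfolding weakly_closed_elems_def by auto
qed


theorem mainTheorem3:
  fixes G :: "('a, 'b) monoid_scheme" and p :: nat and S :: "'a set"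
  assumes "group G" and "finite (carrier G)" and "Factorial_Ring.prime p"
    and "sylow_subgroup G p S"
  shows "subgroup (weakly_closed_elems G S) G
         \<and> weakly_closed_elems G S \<subseteq> center_of G S"
proof -
  interpret group G by (rule assms(1))
  have S: "subgroup S G" and cS: "card S = p ^ multiplicity p (order G)"
    using assms(4) unfolding sylow_subgroup_def by auto
  have Sc: "S \<subseteq> carrier G" using subgroup.subset[OF S] .
  let ?W = "weakly_closed_elems G S"
  have Wc: "?W \<subseteq> carrier G" using Sc unfolding weakly_closed_elems_def by auto
  have cen: "?W \<subseteq> center_of G S"
  proof
    fix x assume x: "x \<in> ?W"
    have "x \<in> S" using x unfolding weakly_closed_elems_def by simp
    thus "x \<in> center_of G S" unfolding center_of_def using W_center[OF S x] by auto
  qed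
  have one: "\<one>\<^bsub>G\<^esub> \<in> ?W"
    unfolding weakly_closed_elems_def conj_by_def using subgroup.one_closed[OF S] by auto
  have inv: "inv\<^bsub>G\<^esub> x \<in> ?W" if x: "x \<in> ?W" for x
  proof -
    have xS: "x \<in> S" and xc: "x \<in> carrier G" using x Sc unfolding weakly_closed_elems_def by auto
    have "conj_by G (inv\<^bsub>G\<^esub> x) g = inv\<^bsub>G\<^esub> x" if g: "g \<in> carrier G" and iS: "conj_by G (inv\<^bsub>G\<^esub> x) g \<in> S" for g
    proof -
      have "conj_by G x g = inv\<^bsub>G\<^esub> (conj_by G (inv\<^bsub>G\<^esub> x) g)"
        using conj_inv[OF xc g] conj_closed[OF xc g] by simp
      also have "\<dots> \<in> S" using subgroup.m_inv_closed[OF S iS] .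
      finally have "conj_by G x g = x" using x g unfolding weakly_closed_elems_def by auto
      thus ?thesis using conj_inv[OF xc g] by simp
    qed
    moreover have "inv\<^bsub>G\<^esub> x \<in> S" using subgroup.m_inv_closed[OF S xS] .
    ultimately show ?thesis unfolding weakly_closed_elems_def by auto
  qed
  have "subgroup ?W G"
  proof (rule subgroupI)
    show "?W \<subseteq> carrier G" by (rule Wc)
    show "?W \<noteq> {}" using one by auto
    show "inv\<^bsub>G\<^esub> a \<in> ?W" if "a \<in> ?W" for a using inv[OF that] .
    show "a \<otimes>\<^bsub>G\<^esub> b \<in> ?W" if "a \<in> ?W" "b \<in> ?W" for a b
      using W_mult[OF assms(2) assms(3) S cS that] .
  qed
  thus ?thesis using cen by simp
qed

end
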